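(* Let $A\in\{\mathbb Z,\mathbb R\}$ and let $X\subset\mathbb R^d$ be a bounded subset whose convex hull is full-dimensional. Then every $A$-$X$-free convex body in $\mathbb R^d$ is contained in a full-dimensional $A$-$X$-free convex body.
   Context: A convex body in $\mathbb R^d$ is a nonempty compact convex subset of $\mathbb R^d$. An $A$-unimodular transformation is a map $T(x)=Mx+b$ with $M\in \mathrm{GL}_d(\mathbb Z)$ and $b\in A^d$; an $A$-unimodular copy of $X$ is $T(X)$ for such a $T$. A convex set is $A$-$X$-free if its relative interior contains no $A$-unimodular copy of $X$ (the relative interior of a single point is that point). *)

theory Defs
  imports "HOL-Analysis.Analysis"
begin

definition GL_int :: "(real^'n^'n) set" where
  "GL_int = {M. (\<forall>i j. M $ i $ j \<in> \<int>) \<and> invertible M \<and>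
                (\<forall>i j. matrix_inv M $ i $ j \<in> \<int>)}"

definition unimodular_copy :: "real set \<Rightarrow> (real^'n) set \<Rightarrow> (real^'n) set \<Rightarrow> bool" where
  "unimodular_copy A X Y \<longleftrightarrow>
     (\<exists>M b. M \<in> GL_int \<and> (\<forall>i. b $ i \<in> A) \<and> Y = (\<lambda>x. M *v x + b) ` X)"

definition AX_free :: "real set \<Rightarrow> (real^'n) set \<Rightarrow> (real^'n) set \<Rightarrow> bool" where
  "AX_free A X K \<longleftrightarrow> \<not> (\<exists>Y. unimodular_copy A X Y \<and> Y \<subseteq> rel_interior K)"

definition convex_body :: "(real^'n) set \<Rightarrow> bool" where
  "convex_body K \<longleftrightarrow> K \<noteq> {} \<and> compact K \<and> convex K"

end

theory Submission
  imports Defs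
begin

lemma span_bounded:
  fixes f :: "nat \<Rightarrow> 'a::real_vector \<Rightarrow> 'b::real_normed_vector"
  assumes lin: "\<And>n. linear (f n)" and S: "\<And>x. x\<in>S \<Longrightarrow> \<exists>B. \<forall>n. norm (f n x) \<le> B"
    and v: "v \<in> span S"
  shows "\<exists>B. \<forall>n. norm (f n v) \<le> B"
  using v
proof (induction rule: span_induct_alt)
  case base
  then show ?case using lin by (auto simp: linear_0)
next
  case (step c x y)
  obtain B1 where B1: "\<forall>n. norm (f n x) \<le> B1" using S step by blast
  obtain B2 where B2: "\<forall>n. norm (f n y) \<le> B2" using step by blast
  have "norm (f n (c *\<^sub>R x + y)) \<le> \<bar>c\<bar> * B1 + B2" for n
  proof -
    have "f n (c *\<^sub>R x + y) = c *\<^sub>R f n x + f n y"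
      using lin[of n] by (simp add: linear_add linear_scale)
    also have "norm \<dots> \<le> \<bar>c\<bar> * norm (f n x) + norm (f n y)"
      by (metis norm_scaleR norm_triangle_ineq)
    also have "\<dots> \<le> \<bar>c\<bar> * B1 + B2"
      using B1 B2 by (simp add: add_mono mult_left_mono)
    finally show ?thesis .
  qed
  then show ?case by blast
qed

lemma ints_close_eq:
  fixes a b :: real
  assumes "a \<in> \<int>" "b \<in> \<int>" "\<bar>a - b\<bar> < 1"
  shows "a = b"
proof -
  obtain i j where "a = of_int i" "b = of_int j" using assms by (auto elim!: Ints_cases)
  moreover have "\<bar>i - j\<bar> < 1" using assms(3) calculation
    by (metis of_int_abs of_int_diff of_int_less_1_iff)
  ultimately show ?thesis by simp
qed

lemma norm_matrix_le:
  fixes M :: "real^'n^'m"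
  shows "norm M \<le> (\<Sum>i\<in>(UNIV::'m set). \<Sum>j\<in>UNIV. norm (M *v axis j 1))"
proof -
  have "norm M \<le> (\<Sum>i\<in>UNIV. norm (M $ i))"
    unfolding norm_vec_def by (rule L2_set_le_sum) auto
  also have "\<dots> \<le> (\<Sum>i\<in>UNIV. \<Sum>j\<in>UNIV. \<bar>M $ i $ j\<bar>)"
    by (intro sum_mono norm_le_l1_cart)
  also have "\<dots> \<le> (\<Sum>i\<in>(UNIV::'m set). \<Sum>j\<in>UNIV. norm (M *v axis j 1))"
  proof -
    have "\<bar>M $ i $ j\<bar> \<le> norm (M *v axis j 1)" for i j
    proof -
      have "M $ i $ j = (M *v axis j 1) $ i"
        by (simp add: matrix_vector_mult_basis column_def)
      then show ?thesis
        by (metis component_le_norm_cart)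
    qed
    then show ?thesis by (intro sum_mono) auto
  qed
  finally show ?thesis .
qed

lemma eventually_const_int_seq:
  fixes F :: "nat \<Rightarrow> real^'n^'n"
  assumes ints: "\<And>n i j. F n $ i $ j \<in> \<int>" and lim: "F \<longlonglongrightarrow> l"
  shows "\<exists>N. \<forall>n\<ge>N. F n = F N"
proof -
  have "\<forall>\<^sub>F n in sequentially. dist (F n) l < 1/2"
    using lim unfolding tendsto_iff by (meson half_gt_zero zero_less_one)
  then obtain N where N: "\<And>n. n \<ge> N \<Longrightarrow> dist (F n) l < 1/2"
    by (auto simp: eventually_sequentially)
  have "F n = F N" if "n \<ge> N" for n
  proof -
    have d: "norm (F n - F N) < 1"
      using N[OF that] N[of N] dist_triangle2[of "F n" "F N" l]
      by (simp add: dist_norm)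
    show ?thesis
    proof (simp add: vec_eq_iff, intro allI)
      fix i j
      have "\<bar>(F n - F N) $ i $ j\<bar> \<le> norm ((F n - F N) $ i)" by (rule component_le_norm_cart)
      also have "\<dots> \<le> norm (F n - F N)" by (rule Finite_Cartesian_Product.norm_nth_le)
      finally have "\<bar>F n $ i $ j - F N $ i $ j\<bar> < 1" using d by simp
      then show "F n $ i $ j = F N $ i $ j" using ints ints_close_eq by blast
    qed
  qed
  then show ?thesis by blast
qed

theorem lemma2p5:
  fixes A :: "real set" and X K :: "(real^'n) set"
  assumes "A = \<int> \<or> A = UNIV"
    and "bounded X"
    and "aff_dim (convex hull X) = int CARD('n)"
    and "convex_body K"
    and "AX_free A X K"
  shows "\<exists>L. convex_body L \<and> aff_dim L = int CARD('n) \<and> K \<subseteq> L \<and> AX_free A X L"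
proof (cases "aff_dim K = int CARD('n)")
  case True
  then show ?thesis using assms by blast
next
  case False
  have Kne: "K \<noteq> {}" and Kc: "compact K" and Kcv: "convex K"
    using assms(4) by (auto simp: convex_body_def)
  have Klow: "aff_dim K < int CARD('n)"
    using False aff_dim_le_DIM[of K] by simp
  have affX: "aff_dim X = int CARD('n)" using assms(3) by (simp add: aff_dim_convex_hull)
  define L where "L e = {x + y | x y. x \<in> K \<and> y \<in> cball (0::real^'n) e}" for e :: real
  have Lbody: "convex_body (L e) \<and> aff_dim (L e) = int CARD('n) \<and> K \<subseteq> L e" if "e > 0" for e
  proof (intro conjI)
    have eq: "L e = (\<Union>x\<in>K. \<Union>y\<in>cball 0 e. {x + y})" unfolding L_def by blast
    show "convex_body (L e)"
      unfolding convex_body_def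
    proof (intro conjI)
      obtain k where "k \<in> K" using Kne by blast
      then have "k + 0 \<in> L e" unfolding L_def using that by force
      then show "L e \<noteq> {}" by blast
      show "compact (L e)" unfolding L_def using Kc by (intro compact_sums) (auto simp: compact_cball)
      show "convex (L e)" unfolding eq using Kcv by (intro convex_sums) (auto simp: convex_cball)
    qed
    show "K \<subseteq> L e" unfolding L_def using that by force
    obtain k0 where k0: "k0 \<in> K" using Kne by blast
    have "ball k0 e \<subseteq> L e"
    proof
      fix z assume "z \<in> ball k0 e"
      then have "z - k0 \<in> cball 0 e" by (simp add: dist_norm norm_minus_commute)
      moreover have "z = k0 + (z - k0)" by simp
      ultimately show "z \<in> L e" unfolding L_def using k0 by blast
    qed
    then have "aff_dim (ball k0 e) \<le> aff_dim (L e)" by (rule aff_dim_subset)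
    moreover have "aff_dim (ball k0 e) = int CARD('n)"
      using aff_dim_open[of "ball k0 e"] that by simp
    ultimately show "aff_dim (L e) = int CARD('n)"
      using aff_dim_le_DIM[of "L e"] by simp
  qed
  have Lmem: "\<exists>k\<in>K. dist z k \<le> e" if "z \<in> L e" for z e
    using that unfolding L_def by (force simp: dist_norm)
  have "bounded K" using Kc compact_imp_bounded by blast
  then obtain R where R: "\<And>k. k \<in> K \<Longrightarrow> norm k \<le> R"
    unfolding bounded_iff by blast
  have "\<exists>n. AX_free A X (L (inverse (real (Suc n))))"
  proof (rule ccontr)
    assume neg: "\<not> ?thesis"
    have "\<exists>M b. M \<in> GL_int \<and> (\<forall>x\<in>X. M *v x + b \<in> L (inverse (real (Suc n))))" for n
    proof -
      have "\<not> AX_free A X (L (inverse (real (Suc n))))" using neg by blast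
      then obtain Y M b where Y: "M \<in> GL_int" "Y = (\<lambda>x. M *v x + b) ` X"
        "Y \<subseteq> rel_interior (L (inverse (real (Suc n))))"
        unfolding AX_free_def unimodular_copy_def by blast
      have "\<forall>x\<in>X. M *v x + b \<in> L (inverse (real (Suc n)))"
      proof
        fix x assume "x \<in> X"
        then have "M *v x + b \<in> Y" using Y(2) by blast
        then show "M *v x + b \<in> L (inverse (real (Suc n)))"
          using Y(3) rel_interior_subset by blast
      qed
      then show ?thesis using Y(1) by blast
    qed
    then obtain Mf bf where H: "\<And>n. Mf n \<in> GL_int"
      "\<And>n x. x \<in> X \<Longrightarrow> Mf n *v x + bf n \<in> L (inverse (real (Suc n)))"
      by metis
    have Hd: "infdist (Mf n *v x + bf n) K \<le> inverse (real (Suc n))" if "x \<in> X" for n x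
      using Lmem[OF H(2)[OF that, of n]] infdist_le by (meson order.trans)
    have Hn: "norm (Mf n *v x + bf n) \<le> R + 1" if xX: "x \<in> X" for n x
    proof -
      obtain k where k: "k \<in> K" "dist (Mf n *v x + bf n) k \<le> inverse (real (Suc n))"
        using Lmem[OF H(2)[OF xX, of n]] by blast
      have "inverse (real (Suc n)) \<le> 1" by (simp add: field_simps)
      then have "norm (Mf n *v x + bf n - k) \<le> 1" using k by (simp add: dist_norm)
      then show ?thesis using R[OF k(1)] norm_triangle_sub[of "Mf n *v x + bf n" k] by linarith
    qed
    have Xne: "X \<noteq> {}" using affX by auto
    then obtain x0 where x0: "x0 \<in> X" by blast
    have "affine hull X = UNIV" using affX aff_dim_eq_full[of X] by simp
    then have spanU: "v \<in> span ((\<lambda>x. - x0 + x) ` (X - {x0}))" for v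
      using affine_hull_span2[OF x0]
      by (metis (no_types, lifting) UNIV_I add_left_cancel image_iff)
    have allbd: "\<exists>B. \<forall>n. norm (Mf n *v v) \<le> B" for v
    proof (rule span_bounded[OF _ _ spanU])
      show "linear ((*v) (Mf n))" for n by simp
      fix y assume "y \<in> (\<lambda>x. - x0 + x) ` (X - {x0})"
      then obtain x where x: "x \<in> X" "y = x - x0" by auto
      have "norm (Mf n *v y) \<le> 2 * (R + 1)" for n
      proof -
        have "Mf n *v y = (Mf n *v x + bf n) - (Mf n *v x0 + bf n)"
          using x by (simp add: matrix_vector_mult_diff_distrib)
        then have "norm (Mf n *v y) \<le> norm (Mf n *v x + bf n) + norm (Mf n *v x0 + bf n)"
          by (metis norm_triangle_ineq4)
        moreover have "norm (Mf n *v x + bf n) + norm (Mf n *v x0 + bf n) \<le> (R + 1) + (R + 1)"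
          using Hn[OF x(1), of n] Hn[OF x0, of n] by (rule add_mono)
        ultimately show ?thesis by simp
      qed
      then show "\<exists>B. \<forall>n. norm (Mf n *v y) \<le> B" by blast
    qed
    have "\<forall>j. \<exists>B. \<forall>n. norm (Mf n *v axis j 1) \<le> B" using allbd by blast
    then obtain Bj where Bj: "\<And>j n. norm (Mf n *v axis j 1) \<le> Bj j" by metis
    have "norm (Mf n) \<le> (\<Sum>i\<in>(UNIV::'n set). \<Sum>j\<in>UNIV. Bj j)" for n
      using norm_matrix_le[of "Mf n"] Bj
      by (meson order.trans sum_mono)
    then have "bounded (range Mf)" unfolding bounded_iff by blast
    then obtain Ml r1 where r1: "strict_mono r1" "(Mf \<circ> r1) \<longlonglongrightarrow> Ml"
      using bounded_imp_convergent_subsequence by blast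
    have ints: "(Mf \<circ> r1) n $ i $ j \<in> \<int>" for n i j
      using H(1)[of "r1 n"] by (simp add: GL_int_def)
    obtain N where N: "\<And>n. n \<ge> N \<Longrightarrow> Mf (r1 n) = Mf (r1 N)"
      using eventually_const_int_seq[OF ints r1(2)] by auto
    define M0 where "M0 = Mf (r1 N)"
    obtain Bx where Bx: "\<And>n. norm (Mf n *v x0) \<le> Bx" using allbd by blast
    have "norm (bf n) \<le> R + 1 + Bx" for n
    proof -
      have "norm (bf n) \<le> norm (Mf n *v x0 + bf n) + norm (Mf n *v x0)"
        by (metis add_diff_cancel_left' norm_triangle_ineq4)
      then show ?thesis using Hn[OF x0, of n] Bx[of n] by linarith
    qed
    then have "bounded (range (bf \<circ> r1))" unfolding bounded_iff by auto
    then obtain b0 r2 where r2: "strict_mono r2" "((bf \<circ> r1) \<circ> r2) \<longlonglongrightarrow> b0"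
      using bounded_imp_convergent_subsequence by blast
    define r where "r = r1 \<circ> r2"
    have rmono: "strict_mono r" unfolding r_def using r1(1) r2(1) by (rule strict_mono_o)
    have Mr: "Mf (r n) = M0" if "n \<ge> N" for n
    proof -
      have "r2 n \<ge> n" using r2(1) seq_suble by blast
      then have "r2 n \<ge> N" using that by linarith
      then have "Mf (r1 (r2 n)) = Mf (r1 N)" by (rule N)
      then show ?thesis unfolding r_def M0_def by simp
    qed
    have br: "(\<lambda>n. bf (r n)) \<longlonglongrightarrow> b0" using r2(2) unfolding r_def by (simp add: o_def)
    have inK: "M0 *v x + b0 \<in> K" if x: "x \<in> X" for x
    proof -
      have lim1: "(\<lambda>n. infdist (M0 *v x + bf (r n)) K) \<longlonglongrightarrow> infdist (M0 *v x + b0) K"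
        by (intro tendsto_intros br)
      have le: "infdist (M0 *v x + bf (r n)) K \<le> inverse (real (Suc n))" if "n \<ge> N" for n
      proof -
        have "infdist (M0 *v x + bf (r n)) K \<le> inverse (real (Suc (r n)))"
          using Hd[OF x, of "r n"] Mr[OF that] by simp
        also have "\<dots> \<le> inverse (real (Suc n))"
        proof -
          have "n \<le> r n" using seq_suble[OF rmono] by blast
          then have "real (Suc n) \<le> real (Suc (r n))" by simp
          then show ?thesis by (rule le_imp_inverse_le) simp
        qed
        finally show ?thesis .
      qed
      have "\<exists>N. \<forall>n\<ge>N. infdist (M0 *v x + bf (r n)) K \<le> inverse (real (Suc n))"
        using le by blast
      then have "infdist (M0 *v x + b0) K \<le> 0"
        by (rule LIMSEQ_le[OF lim1 LIMSEQ_inverse_real_of_nat])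
      moreover have "infdist (M0 *v x + b0) K \<ge> 0" by (rule infdist_nonneg)
      ultimately have "infdist (M0 *v x + b0) K = 0" by linarith
      then show ?thesis using in_closed_iff_infdist_zero[OF compact_imp_closed[OF Kc] Kne] by blast
    qed
    have inv: "invertible M0" using H(1)[of "r1 N"] unfolding M0_def GL_int_def by blast
    then obtain Minv where "Minv ** M0 = mat 1" using invertible_def by blast
    then have injM: "inj ((*v) M0)" using matrix_left_invertible_injective by blast
    have img: "(\<lambda>x. M0 *v x + b0) ` X = (+) b0 ` ((*v) M0 ` X)"
      by (auto simp: image_image add.commute)
    have "aff_dim ((\<lambda>x. M0 *v x + b0) ` X) = int CARD('n)"
      unfolding img aff_dim_translation_eq using injM affX
      by (simp add: aff_dim_injective_linear_image)
    moreover have "(\<lambda>x. M0 *v x + b0) ` X \<subseteq> K" using inK by blast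
    then have "aff_dim ((\<lambda>x. M0 *v x + b0) ` X) \<le> aff_dim K" by (rule aff_dim_subset)
    ultimately show False using Klow by linarith
  qed
  then obtain n where "AX_free A X (L (inverse (real (Suc n))))" by blast
  then show ?thesis using Lbody[of "inverse (real (Suc n))"] by auto
qed

end
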